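(* Let $\Sigma$ be a finite set of tuple-generating dependencies (possibly cyclic, possibly with self-joins and constants) over a relational schema, and let $D$ be a finite database instance whose entries are constants and labeled nulls. Suppose a user inserts a tuple (or replaces all occurrences of a labeled null by a constant), and the Youtopia forward chase is then run without any frontier operations, i.e. only deterministic chase steps (as described in the context) are performed. Then the chase, viewed as a tree whose nodes are inserted tuples and whose edges are direct causality relationships, has the property that computation stops along every path after finitely many steps (unless the chase terminates, with all violations repaired, before such a point is reached). In particular, only finitely many tuples are inserted before the chase either terminates or reaches a state in which every pending violation is awaiting a frontier operation.
   Context: A tgd has the form $\Phi(\bar x,\bar y)\rightarrow \exists \bar z\,\Psi(\bar x,\bar z)$, with $\Phi,\Psi$ conjunctions of relational atoms over variables and constants; free variables are universally quantified. A database contains constants and labeled nulls. For a tgd $\sigma$ with free variables $\bar x$, LHS $\sigma_l(\bar x)$ and RHS $\sigma_r(\bar x,\bar y)$, a violation is an assignment $\bar a$ of database values to $\bar x$ with $D\models\sigma_l[\bar x\mapsto\bar a]$ but $D\not\models\sigma_r[\bar x\mapsto \bar a]$; its witness is the set of tuples of $D$ matching the LHS under this assignment. Specificity: a tuple $t=(a_1,\dots,a_k)$ is more specific than $t'=(a'_1,\dots,a'_k)$ (same relation) if the map $f(a'_i)=a_i$ is a well-defined function and $f$ is the identity on constants (values that are not labeled nulls). Forward chase (deterministic part): maintain a queue of violations, initially those created by the user's operation. Repeatedly pick a violation $v$ from the queue that is still present; instantiate the RHS of the violated tgd under the assignment of $v$, using fresh labeled nulls for the existentially quantified variables, yielding generated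 tuples. If for every generated tuple $t$ in relation $R$, $R$ contains no tuple more specific than $t$, insert all generated tuples (a deterministic repair), remove $v$, and append any new violations created by the insertions to the queue. Otherwise the generated tuples are set aside as positive frontier tuples (not inserted), the chase does not pursue that violation further, and it awaits a user frontier operation on it. The chase continues deterministically while some violation in the queue is deterministically repairable. *)

theory Defs
  imports Main
begin

text \<open>Database values: constants or labeled nulls (labels are naturals, so fresh nulls always exist).\<close>
datatype 'c val = Const 'c | Null nat

datatype ('v, 'c) trm = Var 'v | Cst 'c

type_synonym ('r, 'c) fact = "'r \<times> 'c val list"
type_synonym ('r, 'v, 'c) atom = "'r \<times> ('v, 'c) trm list"
type_synonym ('r, 'c) db = "('r, 'c) fact set"

text \<open>A tgd  lhs(x,y) --> exists z. rhs(x,z), both sides conjunctions (lists) of atoms.\<close>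
datatype ('r, 'v, 'c) tgd = TGD (lhs: "('r, 'v, 'c) atom list") (rhs: "('r, 'v, 'c) atom list")

fun trm_vars :: "('v, 'c) trm \<Rightarrow> 'v set" where
  "trm_vars (Var v) = {v}"
| "trm_vars (Cst c) = {}"

definition atoms_vars :: "('r, 'v, 'c) atom list \<Rightarrow> 'v set" where
  "atoms_vars as = (\<Union>(R, ts)\<in>set as. \<Union>t\<in>set ts. trm_vars t)"

definition univ_vars :: "('r, 'v, 'c) tgd \<Rightarrow> 'v set" where
  "univ_vars \<sigma> = atoms_vars (lhs \<sigma>)"

definition ex_vars :: "('r, 'v, 'c) tgd \<Rightarrow> 'v set" where
  "ex_vars \<sigma> = atoms_vars (rhs \<sigma>) - univ_vars \<sigma>"

fun eval_trm :: "('v \<Rightarrow> 'c val) \<Rightarrow> ('v, 'c) trm \<Rightarrow> 'c val" where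
  "eval_trm b (Var v) = b v"
| "eval_trm b (Cst c) = Const c"

definition inst_atom :: "('v \<Rightarrow> 'c val) \<Rightarrow> ('r, 'v, 'c) atom \<Rightarrow> ('r, 'c) fact" where
  "inst_atom b A = (fst A, map (eval_trm b) (snd A))"

definition inst :: "('v \<Rightarrow> 'c val) \<Rightarrow> ('r, 'v, 'c) atom list \<Rightarrow> ('r, 'c) fact set" where
  "inst b as = inst_atom b ` set as"

definition adom :: "('r, 'c) db \<Rightarrow> 'c val set" where
  "adom D = (\<Union>(R, vs)\<in>D. set vs)"

definition db_nulls :: "('r, 'c) db \<Rightarrow> nat set" where
  "db_nulls D = {n. Null n \<in> adom D}"

definition wf_db :: "('r \<Rightarrow> nat) \<Rightarrow> ('r, 'c) db \<Rightarrow> bool" where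
  "wf_db ar D \<longleftrightarrow> (\<forall>(R, vs)\<in>D. length vs = ar R)"

definition wf_tgd :: "('r \<Rightarrow> nat) \<Rightarrow> ('r, 'v, 'c) tgd \<Rightarrow> bool" where
  "wf_tgd ar \<sigma> \<longleftrightarrow> (\<forall>(R, ts)\<in>set (lhs \<sigma>) \<union> set (rhs \<sigma>). length ts = ar R)"

type_synonym ('r, 'v, 'c) viol = "('r, 'v, 'c) tgd \<times> ('v \<rightharpoonup> 'c val)"

definition is_violation :: "('r, 'v, 'c) tgd set \<Rightarrow> ('r, 'c) db \<Rightarrow> ('r, 'v, 'c) viol \<Rightarrow> bool" where
  "is_violation \<Sigma> D v \<longleftrightarrow>
     (let \<sigma> = fst v; a = snd v in
        \<sigma> \<in> \<Sigma> \<and> dom a = univ_vars \<sigma> \<and> ran a \<subseteq> adom D \<and>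
        inst (\<lambda>x. the (a x)) (lhs \<sigma>) \<subseteq> D \<and>
        \<not> (\<exists>b. (\<forall>x\<in>univ_vars \<sigma>. b x = the (a x)) \<and> inst b (rhs \<sigma>) \<subseteq> D))"

definition violations :: "('r, 'v, 'c) tgd set \<Rightarrow> ('r, 'c) db \<Rightarrow> ('r, 'v, 'c) viol set" where
  "violations \<Sigma> D = {v. is_violation \<Sigma> D v}"

definition generated :: "('r, 'c) db \<Rightarrow> ('r, 'v, 'c) viol \<Rightarrow> ('r, 'c) fact set \<Rightarrow> bool" where
  "generated D v G \<longleftrightarrow>
     (\<exists>b. (\<forall>x\<in>univ_vars (fst v). b x = the (snd v x)) \<and>
          inj_on b (ex_vars (fst v)) \<and>
          (\<forall>x\<in>ex_vars (fst v). \<exists>n. b x = Null n \<and> n \<notin> db_nulls D) \<and>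
          G = inst b (rhs (fst v)))"

definition more_specific :: "('r, 'c) fact \<Rightarrow> ('r, 'c) fact \<Rightarrow> bool" where
  "more_specific t t' \<longleftrightarrow>
     fst t = fst t' \<and> length (snd t) = length (snd t') \<and>
     (\<exists>f. (\<forall>c. f (Const c) = Const c) \<and> (\<forall>i<length (snd t'). f (snd t' ! i) = snd t ! i))"

definition det_repairable :: "('r, 'c) db \<Rightarrow> ('r, 'c) fact set \<Rightarrow> bool" where
  "det_repairable D G \<longleftrightarrow> (\<forall>t\<in>G. \<not> (\<exists>t'\<in>D. more_specific t' t))"

text \<open>Chase state: database, queue of violations, and the list of violations set aside
  (with their positive frontier tuples) awaiting a user frontier operation.\<close>
type_synonym ('r, 'v, 'c) cstate =
  "('r, 'c) db \<times> ('r, 'v, 'c) viol list \<times> (('r, 'v, 'c) viol \<times> ('r, 'c) fact set) list"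

inductive chase_step :: "('r, 'v, 'c) tgd set \<Rightarrow> ('r, 'v, 'c) cstate \<Rightarrow> ('r, 'v, 'c) cstate \<Rightarrow> bool"
  for \<Sigma> where
  drop_stale:
    "v \<notin> violations \<Sigma> D \<Longrightarrow>
     chase_step \<Sigma> (D, Q1 @ v # Q2, F) (D, Q1 @ Q2, F)"
| repair:
    "v \<in> violations \<Sigma> D \<Longrightarrow> generated D v G \<Longrightarrow> det_repairable D G \<Longrightarrow>
     set N = violations \<Sigma> (D \<union> G) - violations \<Sigma> D \<Longrightarrow> distinct N \<Longrightarrow>
     chase_step \<Sigma> (D, Q1 @ v # Q2, F) (D \<union> G, Q1 @ Q2 @ N, F)"
| set_aside:
    "v \<in> violations \<Sigma> D \<Longrightarrow> generated D v G \<Longrightarrow> \<not> det_repairable D G \<Longrightarrow>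
     chase_step \<Sigma> (D, Q1 @ v # Q2, F) (D, Q1 @ Q2, F @ [(v, G)])"

datatype ('r, 'c) user_op = Insert "('r, 'c) fact" | ReplaceNull nat 'c

fun subst_null :: "nat \<Rightarrow> 'c \<Rightarrow> 'c val \<Rightarrow> 'c val" where
  "subst_null n c (Null m) = (if m = n then Const c else Null m)"
| "subst_null n c (Const d) = Const d"

fun apply_op :: "('r, 'c) user_op \<Rightarrow> ('r, 'c) db \<Rightarrow> ('r, 'c) db" where
  "apply_op (Insert t) D = insert t D"
| "apply_op (ReplaceNull n c) D = (\<lambda>(R, vs). (R, map (subst_null n c) vs)) ` D"

fun wf_op :: "('r \<Rightarrow> nat) \<Rightarrow> ('r, 'c) user_op \<Rightarrow> bool" where
  "wf_op ar (Insert t) = wf_db ar {t}"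
| "wf_op ar (ReplaceNull n c) = True"

end

theory Submission
  imports Defs
begin

fun idx :: "'a \<Rightarrow> 'a list \<Rightarrow> nat" where
  "idx x [] = 0"
| "idx x (y # ys) = (if x = y then 0 else Suc (idx x ys))"

lemma idx_props: "x \<in> set xs \<Longrightarrow> idx x xs < length xs \<and> xs ! idx x xs = x"
  by (induct xs) auto

definition pv :: "'c val list \<Rightarrow> 'c val \<Rightarrow> 'c + nat" where
  "pv xs v = (case v of Const c \<Rightarrow> Inl c | Null n \<Rightarrow> Inr (idx v xs))"

definition pat :: "('r, 'c) fact \<Rightarrow> 'r \<times> ('c + nat) list" where
  "pat t = (fst t, map (pv (snd t)) (snd t))"

lemma pat_ms:
  assumes "pat t = pat t'" shows "more_specific t' t"
proof -
  obtain R xs where t: "t = (R, xs)" by (cases t)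
  obtain R' ys where t': "t' = (R', ys)" by (cases t')
  have R: "R' = R" and m: "map (pv xs) xs = map (pv ys) ys" using assms t t' by (auto simp: pat_def)
  have len: "length ys = length xs" using arg_cong[OF m, of length] by simp
  define f where "f x = (case x of Const c \<Rightarrow> Const c | Null n \<Rightarrow> ys ! idx x xs)" for x
  have "f (xs ! i) = ys ! i" if i: "i < length xs" for i
  proof (cases "xs ! i")
    case (Const c)
    have "pv xs (xs ! i) = pv ys (ys ! i)" using m i len
      by (metis nth_map)
    then show ?thesis using Const by (auto simp: pv_def f_def split: val.splits)
  next
    case (Null n)
    have e: "pv xs (xs ! i) = pv ys (ys ! i)" using m i len
      by (metis nth_map)
    have xi: "xs ! i \<in> set xs" using i by simp
    have yi: "ys ! i \<in> set ys" using i len by simp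
    have j: "idx (xs ! i) xs = idx (ys ! i) ys"
      using e Null by (auto simp: pv_def split: val.splits)
    have "ys ! idx (ys ! i) ys = ys ! i" using idx_props[OF yi] by simp
    then show ?thesis using Null j by (simp add: f_def)
  qed
  moreover have "\<forall>c. f (Const c) = Const c" by (simp add: f_def)
  ultimately show ?thesis unfolding more_specific_def using t t' R len by auto
qed

definition Rs :: "('r, 'v, 'c) tgd set \<Rightarrow> 'r set" where
  "Rs \<Sigma> = fst ` (\<Union>\<sigma>\<in>\<Sigma>. set (rhs \<sigma>))"

definition KK :: "('r, 'v, 'c) tgd set \<Rightarrow> nat" where
  "KK \<Sigma> = Max (insert 0 ((\<lambda>A. length (snd A)) ` (\<Union>\<sigma>\<in>\<Sigma>. set (rhs \<sigma>))))"

definition tconsts :: "('r, 'v, 'c) tgd set \<Rightarrow> 'c set" where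
  "tconsts \<Sigma> = {c. \<exists>\<sigma>\<in>\<Sigma>. \<exists>A\<in>set (rhs \<sigma>). Cst c \<in> set (snd A)}"

definition cset :: "('r, 'c) db \<Rightarrow> 'c set" where
  "cset D = Const -` adom D"

definition UU :: "('r, 'v, 'c) tgd set \<Rightarrow> 'c set \<Rightarrow> ('r \<times> ('c + nat) list) set" where
  "UU \<Sigma> C = {p. fst p \<in> Rs \<Sigma> \<and> length (snd p) \<le> KK \<Sigma> \<and>
                 set (snd p) \<subseteq> Inl ` C \<union> Inr ` {..<KK \<Sigma>}}"

lemma finite_UU:
  assumes "finite \<Sigma>" "finite C" shows "finite (UU \<Sigma> C)"
proof -
  have "finite (Rs \<Sigma>)" using assms by (simp add: Rs_def)
  moreover have "finite {xs. set xs \<subseteq> Inl ` C \<union> Inr ` {..<KK \<Sigma>} \<and> length xs \<le> KK \<Sigma>}"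
    using assms by (intro finite_lists_length_le) auto
  ultimately have "finite (Rs \<Sigma> \<times> {xs. set xs \<subseteq> Inl ` C \<union> Inr ` {..<KK \<Sigma>} \<and> length xs \<le> KK \<Sigma>})"
    by simp
  moreover have "UU \<Sigma> C \<subseteq> Rs \<Sigma> \<times> {xs. set xs \<subseteq> Inl ` C \<union> Inr ` {..<KK \<Sigma>} \<and> length xs \<le> KK \<Sigma>}"
    by (auto simp: UU_def)
  ultimately show ?thesis by (rule finite_subset[rotated])
qed

lemma adom_Un: "adom (A \<union> B) = adom A \<union> adom B"
  by (auto simp: adom_def)

lemma cset_Un: "cset (A \<union> B) = cset A \<union> cset B"
  by (auto simp: cset_def adom_Un)

lemma gen_props:
  assumes fs: "finite \<Sigma>" and v: "v \<in> violations \<Sigma> D" and g: "generated D v G" and t: "t \<in> G"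
  shows "fst t \<in> Rs \<Sigma> \<and> length (snd t) \<le> KK \<Sigma> \<and>
         (\<forall>x\<in>set (snd t). \<forall>c. x = Const c \<longrightarrow> c \<in> cset D \<union> tconsts \<Sigma>)"
proof -
  obtain \<sigma> a where va: "v = (\<sigma>, a)" by (cases v)
  have sig: "\<sigma> \<in> \<Sigma>" and da: "dom a = univ_vars \<sigma>" and ra: "ran a \<subseteq> adom D"
    using v va by (auto simp: violations_def is_violation_def Let_def)
  obtain b where b1: "\<forall>x\<in>univ_vars \<sigma>. b x = the (a x)"
    and b3: "\<forall>x\<in>ex_vars \<sigma>. \<exists>n. b x = Null n \<and> n \<notin> db_nulls D"
    and G: "G = inst b (rhs \<sigma>)"
    using g va by (auto simp: generated_def)
  obtain A where A: "A \<in> set (rhs \<sigma>)" and tA: "t = inst_atom b A"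
    using t G by (auto simp: inst_def)
  have fin: "finite ((\<lambda>A. length (snd A)) ` (\<Union>\<sigma>\<in>\<Sigma>. set (rhs \<sigma>)))" using fs by simp
  have 1: "fst t \<in> Rs \<Sigma>" using A sig tA by (auto simp: Rs_def inst_atom_def)
  have 2: "length (snd t) \<le> KK \<Sigma>" unfolding KK_def
    using A sig tA fin by (intro Max_ge_iff[THEN iffD2]) (auto simp: inst_atom_def)
  have 3: "c \<in> cset D \<union> tconsts \<Sigma>" if x: "x \<in> set (snd t)" and xc: "x = Const c" for x c
  proof -
    obtain tm where tm: "tm \<in> set (snd A)" and xe: "x = eval_trm b tm"
      using x tA by (auto simp: inst_atom_def)
    show ?thesis
    proof (cases tm)
      case (Cst d)
      then show ?thesis using xe xc tm A sig by (auto simp: tconsts_def)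
    next
      case (Var y)
      have yv: "y \<in> atoms_vars (rhs \<sigma>)" using tm A Var unfolding atoms_vars_def
        by (cases A) force
      show ?thesis
      proof (cases "y \<in> univ_vars \<sigma>")
        case True
        then obtain w where aw: "a y = Some w" using da by auto
        then have "w \<in> adom D" using ra by (auto simp: ran_def)
        moreover have "w = Const c" using xe xc Var b1 True aw by simp
        ultimately show ?thesis by (auto simp: cset_def)
      next
        case False
        then have "y \<in> ex_vars \<sigma>" using yv by (simp add: ex_vars_def)
        then show ?thesis using b3 xe xc Var by auto
      qed
    qed
  qed
  show ?thesis using 1 2 3 by blast
qed

lemma step_cset:
  assumes st: "chase_step \<Sigma> (D, Q, F) (D', Q', F')" and fs: "finite \<Sigma>"
    and c: "cset D \<subseteq> C" and tc: "tconsts \<Sigma> \<subseteq> C"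
  shows "cset D' \<subseteq> C"
  using st
proof cases
  case (repair v G Q1 Q2 N)
  have r4: "v \<in> violations \<Sigma> D" and r5: "generated D v G" and r1: "D' = D \<union> G"
    using repair by auto
  have "cset G \<subseteq> C"
  proof
    fix x assume "x \<in> cset G"
    then obtain t where "t \<in> G" "Const x \<in> set (snd t)"
      by (auto simp: cset_def adom_def)
    then show "x \<in> C" using gen_props[OF fs r4 r5] c tc by blast
  qed
  then show ?thesis using r1 c by (simp add: cset_Un)
qed (use c in auto)

lemma rhs_nonempty:
  assumes "v \<in> violations \<Sigma> D" shows "rhs (fst v) \<noteq> []"
  using assms by (auto simp: violations_def is_violation_def Let_def inst_def)

lemma step_dec:
  assumes st: "chase_step \<Sigma> (D, Q, F) (D', Q', F')" and fs: "finite \<Sigma>"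
    and c: "cset D \<subseteq> C" and tc: "tconsts \<Sigma> \<subseteq> C" and fc: "finite C"
  shows "card (UU \<Sigma> C - pat ` D') < card (UU \<Sigma> C - pat ` D) \<or> (D' = D \<and> length Q' < length Q)"
  using st
proof cases
  case (repair v G Q1 Q2 N)
  have r4: "v \<in> violations \<Sigma> D" and r5: "generated D v G" and r1: "D' = D \<union> G"
    and r6: "det_repairable D G"
    using repair by auto
  obtain b where G: "G = inst b (rhs (fst v))"
    using r5 by (auto simp: generated_def)
  obtain A where "A \<in> set (rhs (fst v))" using rhs_nonempty[OF r4]
    by (cases "rhs (fst v)") auto
  then have "inst_atom b A \<in> G" using G by (auto simp: inst_def)
  then obtain t where tG: "t \<in> G" by blast
  note gp = gen_props[OF fs r4 r5 tG]
  have pU: "pat t \<in> UU \<Sigma> C"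
  proof -
    have "set (snd (pat t)) \<subseteq> Inl ` C \<union> Inr ` {..<KK \<Sigma>}"
    proof
      fix p assume "p \<in> set (snd (pat t))"
      then obtain x where x: "x \<in> set (snd t)" and p: "p = pv (snd t) x"
        by (auto simp: pat_def)
      show "p \<in> Inl ` C \<union> Inr ` {..<KK \<Sigma>}"
      proof (cases x)
        case (Const c')
        then have "c' \<in> C" using gp x c tc by blast
        then show ?thesis using p Const by (auto simp: pv_def)
      next
        case (Null n)
        have "idx x (snd t) < KK \<Sigma>" using idx_props[OF x] gp by linarith
        then show ?thesis using p Null by (auto simp: pv_def)
      qed
    qed
    then show ?thesis using gp by (auto simp: UU_def pat_def)
  qed
  have pD: "pat t \<notin> pat ` D"
  proof
    assume "pat t \<in> pat ` D"
    then obtain t' where "t' \<in> D" "pat t = pat t'" by auto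
    then have "\<exists>t'\<in>D. more_specific t' t" using pat_ms by blast
    then show False using r6 tG by (auto simp: det_repairable_def)
  qed
  have "UU \<Sigma> C - pat ` D' \<subset> UU \<Sigma> C - pat ` D"
    using r1 pU pD tG by auto
  then show ?thesis using finite_UU[OF fs fc] by (simp add: psubset_card_mono)
qed auto

theorem lemma1:
  fixes \<Sigma> :: "('r, 'v, 'c) tgd set" and D :: "('r, 'c) db" and ar :: "'r \<Rightarrow> nat"
    and op :: "('r, 'c) user_op" and Q0 :: "('r, 'v, 'c) viol list"
  assumes "finite \<Sigma>" and "finite D"
    and "\<forall>\<sigma>\<in>\<Sigma>. wf_tgd ar \<sigma>" and "wf_db ar D" and "wf_op ar op"
    and "set Q0 = violations \<Sigma> (apply_op op D) - violations \<Sigma> D" and "distinct Q0"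
  shows "\<not> (\<exists>s. s 0 = (apply_op op D, Q0, []) \<and> (\<forall>i. chase_step \<Sigma> (s i) (s (Suc i))))"
proof
  assume "\<exists>s. s 0 = (apply_op op D, Q0, []) \<and> (\<forall>i. chase_step \<Sigma> (s i) (s (Suc i)))"
  then obtain s where s0: "s 0 = (apply_op op D, Q0, [])"
    and ss: "\<And>i. chase_step \<Sigma> (s i) (s (Suc i))" by blast
  define C where "C = cset (apply_op op D) \<union> tconsts \<Sigma>"
  have fD0: "finite (apply_op op D)" using assms(2) by (cases op) auto
  have "finite (adom (apply_op op D))" using fD0 unfolding adom_def by auto
  then have "finite (cset (apply_op op D))" unfolding cset_def
    by (rule finite_vimageI) (simp add: inj_def)
  moreover have "finite (tconsts \<Sigma>)"
  proof -
    have "tconsts \<Sigma> \<subseteq> (\<Union>\<sigma>\<in>\<Sigma>. \<Union>A\<in>set (rhs \<sigma>). Cst -` set (snd A))"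
      by (auto simp: tconsts_def)
    moreover have "finite (\<Union>\<sigma>\<in>\<Sigma>. \<Union>A\<in>set (rhs \<sigma>). Cst -` set (snd A))"
      using assms(1) by (auto intro!: finite_vimageI simp: inj_def)
    ultimately show ?thesis by (rule finite_subset)
  qed
  ultimately have fC: "finite C" by (simp add: C_def)
  have tc: "tconsts \<Sigma> \<subseteq> C" by (simp add: C_def)
  have inv: "cset (fst (s i)) \<subseteq> C" for i
  proof (induct i)
    case 0 then show ?case using s0 by (simp add: C_def)
  next
    case (Suc i)
    obtain D1 Q1 F1 where e1: "s i = (D1, Q1, F1)" by (cases "s i")
    obtain D2 Q2 F2 where e2: "s (Suc i) = (D2, Q2, F2)" by (cases "s (Suc i)")
    show ?case using step_cset[OF ss[of i, unfolded e1 e2] assms(1) _ tc] Suc e1 e2 by simp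
  qed
  define g where "g i = (card (UU \<Sigma> C - pat ` fst (s i)), length (fst (snd (s i))))" for i
  have "(g (Suc i), g i) \<in> less_than <*lex*> less_than" for i
  proof -
    obtain D1 Q1 F1 where e1: "s i = (D1, Q1, F1)" by (cases "s i")
    obtain D2 Q2 F2 where e2: "s (Suc i) = (D2, Q2, F2)" by (cases "s (Suc i)")
    show ?thesis using step_dec[OF ss[of i, unfolded e1 e2] assms(1) _ tc fC] inv[of i] e1 e2
      by (auto simp: g_def)
  qed
  moreover have "wf (less_than <*lex*> less_than)" by auto
  ultimately show False using wf_iff_no_infinite_down_chain by blast
qed

end
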